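(* Let $0\le a<b$ and $1<\alpha\le 2$. Define $G:[a,b]\times[a,b]\to\mathbb{R}$ by $$G(t,s)=\begin{cases}\dfrac{b-t}{b-a}\big[(\alpha-1)(s-a)-2+\alpha\big], & a\le s\le t\le b,\\[2mm] \dfrac{t-a}{b-a}\big[(\alpha-1)(b-s)+2-\alpha\big], & a\le t\le s\le b.\end{cases}$$ Then: (i) if $b-a<\frac{2-\alpha}{\alpha-1}$, then $\displaystyle\max_{(t,s)\in[a,b]\times[a,b]}|G(t,s)|=2-\alpha$; (ii) if $b-a\ge\frac{2-\alpha}{\alpha-1}$, then $\displaystyle\max_{(t,s)\in[a,b]\times[a,b]}|G(t,s)|=\frac{[(\alpha-1)(b-a)+(2-\alpha)]^2}{4(\alpha-1)(b-a)}$.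
   Context: The function $G$ is the Green's function of the boundary value problem ${}^{CF}D_a^{\alpha}u(t)+q(t)u(t)=0$, $a<t<b$, $u(a)=u(b)=0$, with the Caputo–Fabrizio derivative of order $\alpha$; the statement itself only concerns the explicitly defined function $G$. *)

theory Defs
  imports Complex_Main
begin

text \<open>On the diagonal s = t the two case formulas of the paper differ; we use the
  second formula there (t \<le> s), the first one for s < t.\<close>
definition cfG :: "real \<Rightarrow> real \<Rightarrow> real \<Rightarrow> real \<Rightarrow> real \<Rightarrow> real" where
  "cfG a b \<alpha> t s =
     (if t \<le> s then (t - a) / (b - a) * ((\<alpha> - 1) * (b - s) + 2 - \<alpha>)
      else (b - t) / (b - a) * ((\<alpha> - 1) * (s - a) - 2 + \<alpha>))"

definition is_max_absG :: "real \<Rightarrow> real \<Rightarrow> real \<Rightarrow> real \<Rightarrow> bool" where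
  "is_max_absG a b \<alpha> M \<longleftrightarrow>
     (\<forall>t\<in>{a..b}. \<forall>s\<in>{a..b}. \<bar>cfG a b \<alpha> t s\<bar> \<le> M) \<and>
     (\<exists>t\<in>{a..b}. \<exists>s\<in>{a..b}. \<bar>cfG a b \<alpha> t s\<bar> = M)"

end

theory Submission
  imports Defs
begin

lemma keyF:
  fixes a b \<alpha> t s :: real
  assumes "a < b" "1 < \<alpha>" "\<alpha> \<le> 2" "a \<le> t" "t \<le> b" "a \<le> s" "s \<le> b"
  shows "\<bar>cfG a b \<alpha> t s\<bar> \<le> max (2 - \<alpha>) ((t - a) / (b - a) * ((\<alpha> - 1) * (b - t) + 2 - \<alpha>))"
proof -
  have L: "b - a > 0" using assms by simp
  show ?thesis
  proof (cases "t \<le> s")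
    case True
    have h1: "0 \<le> (\<alpha> - 1) * (b - s) + 2 - \<alpha>" proof -
      have "0 \<le> (\<alpha> - 1) * (b - s)" using assms by simp
      then show ?thesis using assms by linarith
    qed
    have h2: "(\<alpha> - 1) * (b - s) \<le> (\<alpha> - 1) * (b - t)" using assms True by (intro mult_left_mono) auto
    have "0 \<le> (t - a) / (b - a) * ((\<alpha> - 1) * (b - s) + 2 - \<alpha>)" using L h1 assms by simp
    moreover have "(t - a) / (b - a) * ((\<alpha> - 1) * (b - s) + 2 - \<alpha>) \<le> (t - a) / (b - a) * ((\<alpha> - 1) * (b - t) + 2 - \<alpha>)"
      using h2 L assms by (intro mult_left_mono) auto
    moreover have "cfG a b \<alpha> t s = (t - a) / (b - a) * ((\<alpha> - 1) * (b - s) + 2 - \<alpha>)" using True by (simp add: cfG_def)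
    ultimately show ?thesis by (metis abs_of_nonneg max.coboundedI2)
  next
    case False
    have e: "cfG a b \<alpha> t s = (b - t) / (b - a) * ((\<alpha> - 1) * (s - a) - 2 + \<alpha>)" using False by (simp add: cfG_def)
    have q0: "0 \<le> (b - t) / (b - a)" "(b - t) / (b - a) \<le> 1" using L assms by auto
    show ?thesis
    proof (cases "(\<alpha> - 1) * (s - a) - 2 + \<alpha> \<ge> 0")
      case True
      have h2: "(\<alpha> - 1) * (s - a) \<le> (\<alpha> - 1) * (t - a)" using assms False by (intro mult_left_mono) auto
      have "cfG a b \<alpha> t s \<le> (b - t) / (b - a) * ((\<alpha> - 1) * (t - a) - 2 + \<alpha>)"
        unfolding e using h2 q0 by (intro mult_left_mono) auto
      also have "\<dots> \<le> (t - a) / (b - a) * ((\<alpha> - 1) * (b - t) + 2 - \<alpha>)"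
      proof -
        have "(t - a) * ((\<alpha> - 1) * (b - t) + 2 - \<alpha>) - (b - t) * ((\<alpha> - 1) * (t - a) - 2 + \<alpha>)
              = (2 - \<alpha>) * (b - a)" by (simp add: algebra_simps)
        moreover have "(2 - \<alpha>) * (b - a) \<ge> 0" using assms by simp
        ultimately have "(b - t) * ((\<alpha> - 1) * (t - a) - 2 + \<alpha>) \<le> (t - a) * ((\<alpha> - 1) * (b - t) + 2 - \<alpha>)" by linarith
        then show ?thesis using L by (simp add: divide_right_mono)
      qed
      finally have "cfG a b \<alpha> t s \<le> (t - a) / (b - a) * ((\<alpha> - 1) * (b - t) + 2 - \<alpha>)" .
      moreover have "0 \<le> cfG a b \<alpha> t s" unfolding e using q0 True by (intro mult_nonneg_nonneg) auto
      ultimately show ?thesis by simp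
    next
      case neg: False
      have "-((\<alpha> - 1) * (s - a) - 2 + \<alpha>) \<le> 2 - \<alpha>" using assms by simp
      have "- cfG a b \<alpha> t s = (b - t) / (b - a) * (-((\<alpha> - 1) * (s - a) - 2 + \<alpha>))" unfolding e by (simp only: mult_minus_right)
      also have "\<dots> \<le> 1 * (2 - \<alpha>)"
        using q0 neg \<open>-((\<alpha> - 1) * (s - a) - 2 + \<alpha>) \<le> 2 - \<alpha>\<close> by (intro mult_mono) auto
      finally have "- cfG a b \<alpha> t s \<le> 2 - \<alpha>" by simp
      moreover have "cfG a b \<alpha> t s \<le> 0" unfolding e using q0 neg by (intro mult_nonneg_nonpos) auto
      ultimately show ?thesis by simp
    qed
  qed
qed

theorem proposition1:
  fixes a b \<alpha> :: real
  assumes "0 \<le> a" "a < b" "1 < \<alpha>" "\<alpha> \<le> 2"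
  shows "(b - a < (2 - \<alpha>) / (\<alpha> - 1) \<longrightarrow> is_max_absG a b \<alpha> (2 - \<alpha>))
       \<and> (b - a \<ge> (2 - \<alpha>) / (\<alpha> - 1) \<longrightarrow>
            is_max_absG a b \<alpha> (((\<alpha> - 1) * (b - a) + (2 - \<alpha>))\<^sup>2 / (4 * (\<alpha> - 1) * (b - a))))"
proof -
  define c where "c = \<alpha> - 1"
  define d where "d = 2 - \<alpha>"
  define L where "L = b - a"
  have c: "c > 0" and d: "d \<ge> 0" and L: "L > 0" using assms by (auto simp: c_def d_def L_def)
  have F: "(t - a) / (b - a) * ((\<alpha> - 1) * (b - t) + 2 - \<alpha>) = (t - a) * (c * (L - (t - a)) + d) / L" for t
    by (simp add: c_def d_def L_def divide_simps)
  have atb: "cfG a b \<alpha> b b = d" using L by (simp add: cfG_def L_def d_def)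
  show ?thesis
  proof (intro conjI impI)
    assume h: "b - a < (2 - \<alpha>) / (\<alpha> - 1)"
    hence hc: "c * L < d" using c by (simp add: c_def d_def L_def field_simps)
    show "is_max_absG a b \<alpha> (2 - \<alpha>)"
      unfolding is_max_absG_def
    proof (intro conjI ballI)
      fix t s assume t: "t \<in> {a..b}" and s: "s \<in> {a..b}"
      define x where "x = t - a"
      have x: "0 \<le> x" "x \<le> L" using t by (auto simp: x_def L_def)
      have "c * x \<le> c * L" using c x by simp
      hence "0 \<le> (L - x) * (d - c * x)" using x hc by simp
      moreover have "d * L - x * (c * (L - x) + d) = (L - x) * (d - c * x)" by (simp add: algebra_simps)
      ultimately have "x * (c * (L - x) + d) \<le> d * L" by linarith
      hence "x * (c * (L - x) + d) / L \<le> d" using L by (simp add: divide_le_eq mult.commute)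
      then show "\<bar>cfG a b \<alpha> t s\<bar> \<le> 2 - \<alpha>"
        using keyF[of a b \<alpha> t s] assms t s F[of t] by (simp add: x_def d_def)
    next
      show "\<exists>t\<in>{a..b}. \<exists>s\<in>{a..b}. \<bar>cfG a b \<alpha> t s\<bar> = 2 - \<alpha>"
        using atb d assms by (intro bexI[of _ b]) (auto simp: d_def)
    qed
  next
    assume h: "b - a \<ge> (2 - \<alpha>) / (\<alpha> - 1)"
    hence hc: "d \<le> c * L" using c by (simp add: c_def d_def L_def field_simps)
    have M: "((\<alpha> - 1) * (b - a) + (2 - \<alpha>))\<^sup>2 / (4 * (\<alpha> - 1) * (b - a)) = (c * L + d)\<^sup>2 / (4 * c * L)"
      by (simp add: c_def d_def L_def)
    have dM: "d \<le> (c * L + d)\<^sup>2 / (4 * c * L)"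
    proof -
      have "(c * L + d)\<^sup>2 - d * (4 * c * L) = (c * L - d)\<^sup>2" by (simp add: power2_eq_square algebra_simps)
      hence "d * (4 * c * L) \<le> (c * L + d)\<^sup>2" by (metis diff_ge_0_iff_ge zero_le_power2)
      then show ?thesis using c L by (simp add: le_divide_eq)
    qed
    show "is_max_absG a b \<alpha> (((\<alpha> - 1) * (b - a) + (2 - \<alpha>))\<^sup>2 / (4 * (\<alpha> - 1) * (b - a)))"
      unfolding is_max_absG_def M
    proof (intro conjI ballI)
      fix t s assume t: "t \<in> {a..b}" and s: "s \<in> {a..b}"
      define x where "x = t - a"
      have "(c * L + d)\<^sup>2 - 4 * c * (x * (c * (L - x) + d)) = (2 * c * x - (c * L + d))\<^sup>2"
        by (simp add: power2_eq_square algebra_simps)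
      hence "4 * c * (x * (c * (L - x) + d)) \<le> (c * L + d)\<^sup>2" by (metis diff_ge_0_iff_ge zero_le_power2)
      hence "4 * c * (x * (c * (L - x) + d)) / (4 * c * L) \<le> (c * L + d)\<^sup>2 / (4 * c * L)"
        using c L by (intro divide_right_mono) auto
      hence "x * (c * (L - x) + d) / L \<le> (c * L + d)\<^sup>2 / (4 * c * L)"
        using c L by simp
      then show "\<bar>cfG a b \<alpha> t s\<bar> \<le> (c * L + d)\<^sup>2 / (4 * c * L)"
        using keyF[of a b \<alpha> t s] assms t s F[of t] dM by (simp add: x_def d_def)
    next
      define x where "x = (c * L + d) / (2 * c)"
      have x0: "0 \<le> x" using c d L by (simp add: x_def)
      have xL: "x \<le> L" using hc c by (simp add: x_def field_simps)
      have val: "x * (c * (L - x) + d) / L = (c * L + d)\<^sup>2 / (4 * c * L)"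
        using c L by (simp add: x_def field_simps power2_eq_square)
      have e: "cfG a b \<alpha> (a + x) (a + x) = x * (c * (L - x) + d) / L"
        by (simp add: cfG_def c_def d_def L_def divide_simps)
      have nn: "0 \<le> x * (c * (L - x) + d) / L" using x0 xL c d L by simp
      show "\<exists>t\<in>{a..b}. \<exists>s\<in>{a..b}. \<bar>cfG a b \<alpha> t s\<bar> = (c * L + d)\<^sup>2 / (4 * c * L)"
      proof (intro bexI[of _ "a + x"])
        show "\<bar>cfG a b \<alpha> (a + x) (a + x)\<bar> = (c * L + d)\<^sup>2 / (4 * c * L)"
          using e val nn by (simp only: abs_of_nonneg)
      qed (use x0 xL in \<open>auto simp: L_def\<close>)
    qed
  qed
qed

end
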